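(* Let $G$ be a graph with an edge $e=t_1t_2$. Then $G$ has a fundamental rooted cycle basis (a spanning tree $T$ such that every fundamental cycle of $T$ contains $e$) if and only if there exist two vertex sets $S_1,S_2$ such that: (i) $S_1$ and $S_2$ partition $V(G)$; (ii) $t_1$ and $t_2$ belong to different sets of the partition; (iii) for each $i\in\{1,2\}$, the subgraph induced by $S_i$ is connected; (iv) for each $i\in\{1,2\}$, the subgraph induced by $S_i$ is acyclic.
   Context: For a spanning tree $T$, the fundamental cycle of a non-tree edge $f$ is $f$ together with the unique path in $T$ connecting the endpoints of $f$; the fundamental cycle basis of $T$ consists of all fundamental cycles, and it is rooted at $e$ if all of them contain $e$. *)

theory Defs
  imports Main
begin

definition graph :: "'a set \<Rightarrow> 'a set set \<Rightarrow> bool" where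
  "graph V E \<longleftrightarrow> finite V \<and> (\<forall>x\<in>E. x \<subseteq> V \<and> card x = 2)"

definition walk :: "'a set set \<Rightarrow> 'a list \<Rightarrow> bool" where
  "walk F xs \<longleftrightarrow> xs \<noteq> [] \<and> (\<forall>i. Suc i < length xs \<longrightarrow> {xs ! i, xs ! Suc i} \<in> F)"

definition path :: "'a set set \<Rightarrow> 'a list \<Rightarrow> bool" where
  "path F xs \<longleftrightarrow> walk F xs \<and> distinct xs"

definition path_edges :: "'a list \<Rightarrow> 'a set set" where
  "path_edges xs = {{xs ! i, xs ! Suc i} | i. Suc i < length xs}"

definition connected_on :: "'a set \<Rightarrow> 'a set set \<Rightarrow> bool" where
  "connected_on V F \<longleftrightarrow>
     (\<forall>u\<in>V. \<forall>v\<in>V. \<exists>p. walk F p \<and> set p \<subseteq> V \<and> hd p = u \<and> last p = v)"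

definition is_cycle :: "'a set set \<Rightarrow> 'a list \<Rightarrow> bool" where
  "is_cycle F xs \<longleftrightarrow> 3 \<le> length xs \<and> path F xs \<and> {last xs, hd xs} \<in> F"

definition acyclic_edges :: "'a set set \<Rightarrow> bool" where
  "acyclic_edges F \<longleftrightarrow> \<not> (\<exists>xs. is_cycle F xs)"

definition induced_edges :: "'a set set \<Rightarrow> 'a set \<Rightarrow> 'a set set" where
  "induced_edges E S = {x \<in> E. x \<subseteq> S}"

definition spanning_tree :: "'a set \<Rightarrow> 'a set set \<Rightarrow> 'a set set \<Rightarrow> bool" where
  "spanning_tree V E T \<longleftrightarrow> T \<subseteq> E \<and> connected_on V T \<and> acyclic_edges T"

text \<open>Fundamental cycle (as an edge set) of a non-tree edge f: f together with the
  edges of the unique path in T joining the endpoints of f.\<close>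
definition fundamental_cycle :: "'a set set \<Rightarrow> 'a set \<Rightarrow> 'a set set" where
  "fundamental_cycle T f =
     insert f (THE C. \<exists>p. path T p \<and> {hd p, last p} = f \<and> C = path_edges p)"

definition fundamental_rooted_basis ::
    "'a set \<Rightarrow> 'a set set \<Rightarrow> 'a set \<Rightarrow> 'a set set \<Rightarrow> bool" where
  "fundamental_rooted_basis V E e T \<longleftrightarrow>
     spanning_tree V E T \<and> (\<forall>f \<in> E - T. e \<in> fundamental_cycle T f)"

end

theory Submission
  imports Defs
begin


lemma pe_Nil[simp]: "path_edges [] = {}"
  by (simp add: path_edges_def)

lemma pe_single[simp]: "path_edges [x] = {}"
  by (simp add: path_edges_def)

lemma pe_Cons2[simp]: "path_edges (x # y # xs) = insert {x, y} (path_edges (y # xs))"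
proof -
  have "path_edges (x # y # xs) = {{(x # y # xs) ! i, (x # y # xs) ! Suc i} | i. Suc i < length (x # y # xs)}"
    by (simp add: path_edges_def)
  also have "\<dots> = insert {x, y} {{(y # xs) ! i, (y # xs) ! Suc i} | i. Suc i < length (y # xs)}"
  proof (rule set_eqI, rule iffI)
    fix f assume "f \<in> {{(x # y # xs) ! i, (x # y # xs) ! Suc i} | i. Suc i < length (x # y # xs)}"
    then obtain i where i: "f = {(x # y # xs) ! i, (x # y # xs) ! Suc i}" "Suc i < length (x # y # xs)" by blast
    show "f \<in> insert {x, y} {{(y # xs) ! i, (y # xs) ! Suc i} | i. Suc i < length (y # xs)}"
    proof (cases i)
      case 0 then show ?thesis using i by simp
    next
      case (Suc j) then show ?thesis using i by auto
    qed
  next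
    fix f assume "f \<in> insert {x, y} {{(y # xs) ! i, (y # xs) ! Suc i} | i. Suc i < length (y # xs)}"
    then show "f \<in> {{(x # y # xs) ! i, (x # y # xs) ! Suc i} | i. Suc i < length (x # y # xs)}"
    proof
      assume "f = {x, y}" then show ?thesis by force
    next
      assume "f \<in> {{(y # xs) ! i, (y # xs) ! Suc i} | i. Suc i < length (y # xs)}"
      then obtain i where i: "f = {(y # xs) ! i, (y # xs) ! Suc i}" "Suc i < length (y # xs)" by blast
      then have "f = {(x # y # xs) ! Suc i, (x # y # xs) ! Suc (Suc i)}" "Suc (Suc i) < length (x # y # xs)" by auto
      then show ?thesis by blast
    qed
  qed
  also have "\<dots> = insert {x, y} (path_edges (y # xs))" by (simp add: path_edges_def)
  finally show ?thesis .
qed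

lemma pe_Cons: "xs \<noteq> [] \<Longrightarrow> path_edges (x # xs) = insert {x, hd xs} (path_edges xs)"
  by (cases xs) auto

lemma walk_iff: "walk F xs \<longleftrightarrow> xs \<noteq> [] \<and> path_edges xs \<subseteq> F"
  unfolding walk_def path_edges_def by blast

lemma pe_subset: "f \<in> path_edges xs \<Longrightarrow> f \<subseteq> set xs"
  unfolding path_edges_def by auto

lemma pe_append: "ys \<noteq> [] \<Longrightarrow> zs \<noteq> [] \<Longrightarrow>
   path_edges (ys @ zs) = path_edges ys \<union> path_edges zs \<union> {{last ys, hd zs}}"
proof (induction ys)
  case Nil then show ?case by simp
next
  case (Cons y ys)
  show ?case
  proof (cases "ys = []")
    case True then show ?thesis using Cons.prems by (simp add: pe_Cons)
  next
    case False
    then show ?thesis using Cons by (auto simp: pe_Cons)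
  qed
qed

lemma pe_rev[simp]: "path_edges (rev xs) = path_edges xs"
proof (induction xs)
  case Nil then show ?case by simp
next
  case (Cons x xs)
  show ?case
  proof (cases "xs = []")
    case True then show ?thesis by simp
  next
    case False
    then show ?thesis using Cons by (auto simp: pe_append pe_Cons last_rev)
  qed
qed

lemma pe_glue: assumes a: "xs \<noteq> []" "ys \<noteq> []" "last xs = hd ys" shows
   "path_edges (xs @ tl ys) = path_edges xs \<union> path_edges ys"
proof (cases ys)
  case Nil then show ?thesis using a by simp
next
  case (Cons y ys')
  show ?thesis
  proof (cases "ys' = []")
    case True then show ?thesis using Cons by simp
  next
    case False
    then show ?thesis using Cons a by (auto simp: pe_append pe_Cons)
  qed
qed

lemma pe_split: "f \<in> path_edges xs \<longleftrightarrow> (\<exists>ys zs. xs = ys @ zs \<and> ys \<noteq> [] \<and> zs \<noteq> [] \<and> f = {last ys, hd zs})"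
proof
  assume "f \<in> path_edges xs"
  then show "\<exists>ys zs. xs = ys @ zs \<and> ys \<noteq> [] \<and> zs \<noteq> [] \<and> f = {last ys, hd zs}"
  proof (induction xs)
    case Nil then show ?case by simp
  next
    case (Cons x xs)
    show ?case
    proof (cases xs)
      case Nil then show ?thesis using Cons by simp
    next
      case (Cons y xs')
      show ?thesis
      proof (cases "f = {x, y}")
        case True
        then show ?thesis using Cons by (intro exI[of _ "[x]"] exI[of _ xs]) auto
      next
        case False
        then have "f \<in> path_edges xs" using Cons.prems Cons by simp
        then obtain ys zs where "xs = ys @ zs" "ys \<noteq> []" "zs \<noteq> []" "f = {last ys, hd zs}"
          using Cons.IH by blast
        then show ?thesis by (intro exI[of _ "x # ys"] exI[of _ zs]) auto
      qed
    qed
  qed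
next
  assume "\<exists>ys zs. xs = ys @ zs \<and> ys \<noteq> [] \<and> zs \<noteq> [] \<and> f = {last ys, hd zs}"
  then show "f \<in> path_edges xs" by (auto simp: pe_append)
qed

lemma distinct_hd_last: "distinct xs \<Longrightarrow> xs \<noteq> [] \<Longrightarrow> hd xs = last xs \<Longrightarrow> xs = [hd xs]"
  by (cases xs) (auto split: if_splits)

lemma walk_to_path: "walk F p \<Longrightarrow> \<exists>q. path F q \<and> hd q = hd p \<and> last q = last p \<and> set q \<subseteq> set p"
proof (induction p)
  case Nil then show ?case by (simp add: walk_def)
next
  case (Cons x p)
  show ?case
  proof (cases "p = []")
    case True then show ?thesis using Cons.prems by (intro exI[of _ "[x]"]) (simp add: path_def)
  next
    case False
    then have wp: "walk F p" and e: "{x, hd p} \<in> F" using Cons.prems by (auto simp: walk_iff pe_Cons)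
    obtain q where q: "path F q" "hd q = hd p" "last q = last p" "set q \<subseteq> set p" using Cons.IH wp by blast
    have qne: "q \<noteq> []" using q(1) by (simp add: path_def walk_def)
    show ?thesis
    proof (cases "x \<in> set q")
      case True
      then obtain r s where rs: "q = r @ x # s" by (meson split_list)
      have "path_edges (x # s) \<subseteq> path_edges q"
        using rs by (cases "r = []") (auto simp: pe_append)
      then have "path F (x # s)" using q(1) rs by (auto simp: path_def walk_iff)
      then show ?thesis using rs q False by (intro exI[of _ "x # s"]) auto
    next
      case f: False
      have "path F (x # q)" using q(1) f e qne by (auto simp: path_def walk_iff pe_Cons q(2))
      then show ?thesis using q False qne by (intro exI[of _ "x # q"]) auto
    qed
  qed
qed



lemma path_nonempty: "path F p \<Longrightarrow> p \<noteq> []"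
  by (simp add: path_def walk_def)

lemma path_mono: "path F p \<Longrightarrow> F \<subseteq> G \<Longrightarrow> path G p"
  by (auto simp: path_def walk_iff)

lemma walk_mono: "walk F p \<Longrightarrow> F \<subseteq> G \<Longrightarrow> walk G p"
  by (auto simp: walk_iff)

lemma cycle_mono: "is_cycle F p \<Longrightarrow> F \<subseteq> G \<Longrightarrow> is_cycle G p"
  by (auto simp: is_cycle_def path_mono)

lemma no_cycle:
  assumes "acyclic_edges F" "path F p" "3 \<le> length p" "{hd p, last p} \<in> F"
  shows False
proof -
  have "is_cycle F p" using assms by (simp add: is_cycle_def insert_commute)
  then show False using assms(1) by (simp add: acyclic_edges_def)
qed

lemma path_Cons_tl: "path F (x # xs) \<Longrightarrow> xs \<noteq> [] \<Longrightarrow> path F xs"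
  by (auto simp: path_def walk_iff pe_Cons)

lemma path_unique:
  assumes "acyclic_edges F" "path F p" "path F q" "hd p = hd q" "last p = last q"
  shows "p = q"
  using assms(2-)
proof (induction p arbitrary: q)
  case Nil then show ?case using path_nonempty by blast
next
  case (Cons x p)
  have qne: "q \<noteq> []" using Cons.prems path_nonempty by blast
  then obtain q' where q: "q = x # q'" using Cons.prems(3) by (cases q) auto
  show ?case
  proof (cases "p = []")
    case True
    then have "hd q = last q" using Cons.prems by simp
    moreover have "distinct q" using Cons.prems(2) by (simp add: path_def)
    ultimately have "q = [hd q]" using distinct_hd_last qne by blast
    then show ?thesis using True q by simp
  next
    case pne: False
    show ?thesis
    proof (cases "q' = []")
      case True
      then have "last p = x" using Cons.prems q pne by simp
      moreover have "last p \<in> set p" using pne by simp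
      moreover have "x \<notin> set p" using Cons.prems(1) by (simp add: path_def)
      ultimately show ?thesis by simp
    next
      case qne': False
      have pp: "path F p" using path_Cons_tl[OF Cons.prems(1) pne] .
      have pq: "path F q'" using path_Cons_tl[of F x q'] Cons.prems(2) qne' unfolding q by blast
      have lp: "last p = last q'" using Cons.prems q pne qne' by simp
      show ?thesis
      proof (cases "hd p = hd q'")
        case True
        then show ?thesis using Cons.IH[OF pp pq True lp] q by simp
      next
        case False
        define w where "w = p @ tl (rev q')"
        have wp: "path_edges w = path_edges p \<union> path_edges q'"
          unfolding w_def using pne qne' lp by (simp add: pe_glue last_rev hd_rev)
        have ww: "walk F w" using wp pp pq pne by (auto simp: w_def walk_iff path_def)
        have hw: "hd w = hd p" using pne by (simp add: w_def)
        have lw: "last w = hd q'"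
        proof (cases "tl (rev q') = []")
          case True
          then have "length (rev q') = 1" using qne' by (cases "rev q'") auto
          then have "length q' = 1" by simp
          then obtain v where v: "q' = [v]" by (cases q') auto
          then show ?thesis using True lp by (simp add: w_def)
        next
          case False
          then have "last w = last (tl (rev q'))" by (simp add: w_def)
          also have "\<dots> = last (rev q')" using False by (cases "rev q'") auto
          finally show ?thesis by (simp add: last_rev)
        qed
        have xw: "x \<notin> set w"
        proof -
          have "x \<notin> set p" using Cons.prems(1) by (simp add: path_def)
          moreover have "x \<notin> set q'" using Cons.prems(2) q by (simp add: path_def)
          moreover have "set (tl (rev q')) \<subseteq> set (rev q')" by (cases "rev q'") auto
          ultimately show ?thesis by (auto simp: w_def)
        qed
        obtain r where r: "path F r" "hd r = hd p" "last r = hd q'" "set r \<subseteq> set w"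
          using walk_to_path[OF ww] hw lw by metis
        have rne: "r \<noteq> []" using r(1) path_nonempty by blast
        have xr: "x \<notin> set r" using xw r(4) by blast
        have "length r \<noteq> 1"
        proof
          assume "length r = 1"
          then obtain v where "r = [v]" by (cases r) auto
          then show False using r False by simp
        qed
        moreover have "length r \<noteq> 0" using rne by simp
        ultimately have lr: "2 \<le> length r" by linarith
        have e1: "{x, hd p} \<in> F" using Cons.prems(1) pne by (auto simp: path_def walk_iff pe_Cons)
        have e2: "{x, hd q'} \<in> F" using Cons.prems(2) qne' q by (auto simp: path_def walk_iff pe_Cons)
        have "path F (x # r)" using r(1) e1 xr rne r(2) by (auto simp: path_def walk_iff pe_Cons)
        moreover have "3 \<le> length (x # r)" using lr by simp
        moreover have "{hd (x # r), last (x # r)} \<in> F" using e2 r(3) rne by simp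
        ultimately show ?thesis using no_cycle[OF assms(1)] by blast
      qed
    qed
  qed
qed

lemma path_rev: "path F p \<Longrightarrow> path F (rev p)"
  by (auto simp: path_def walk_iff)

lemma path_edges_unique:
  assumes "acyclic_edges F" "path F p" "path F q" "{hd p, last p} = {hd q, last q}"
  shows "path_edges p = path_edges q"
proof -
  have pne: "p \<noteq> []" "q \<noteq> []" using path_nonempty[OF assms(2)] path_nonempty[OF assms(3)] by auto
  from assms(4) have "(hd p = hd q \<and> last p = last q) \<or> (hd p = last q \<and> last p = hd q)"
    by (auto simp: doubleton_eq_iff)
  then show ?thesis
  proof
    assume "hd p = hd q \<and> last p = last q"
    then show ?thesis using path_unique[OF assms(1-3)] by blast
  next
    assume h: "hd p = last q \<and> last p = hd q"
    have "p = rev q" using path_unique[OF assms(1) assms(2) path_rev[OF assms(3)]] h pne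
      by (simp add: hd_rev last_rev)
    then show ?thesis by simp
  qed
qed

lemma fc_eq:
  assumes "acyclic_edges T" "path T q" "{hd q, last q} = f"
  shows "fundamental_cycle T f = insert f (path_edges q)"
proof -
  have "(THE C. \<exists>p. path T p \<and> {hd p, last p} = f \<and> C = path_edges p) = path_edges q"
  proof (rule the_equality)
    show "\<exists>p. path T p \<and> {hd p, last p} = f \<and> path_edges q = path_edges p" using assms by blast
  next
    fix C assume "\<exists>p. path T p \<and> {hd p, last p} = f \<and> C = path_edges p"
    then obtain p where "path T p" "{hd p, last p} = f" "C = path_edges p" by blast
    then show "C = path_edges q" using path_edges_unique[OF assms(1) \<open>path T p\<close> assms(2)] assms(3) by simp
  qed
  then show ?thesis by (simp add: fundamental_cycle_def)
qed

lemma ends_not_edge: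
  assumes "distinct xs" "3 \<le> length xs"
  shows "{hd xs, last xs} \<notin> path_edges xs"
proof
  assume a: "{hd xs, last xs} \<in> path_edges xs"
  from a[unfolded pe_split] obtain ys zs where s: "xs = ys @ zs" "ys \<noteq> []" "zs \<noteq> []" "{hd xs, last xs} = {last ys, hd zs}"
    by blast
  have d: "distinct ys" "distinct zs" "set ys \<inter> set zs = {}" using assms(1) s(1) by auto
  have h: "hd xs = hd ys" "last xs = last zs" using s by auto
  have "last ys \<in> set ys" "hd zs \<in> set zs" "last zs \<in> set zs" "hd ys \<in> set ys" using s by auto
  then have "hd ys = last ys \<and> last zs = hd zs" using s(4) h d(3) by (auto simp: doubleton_eq_iff)
  then have "ys = [hd ys]" "zs = [hd zs]" using distinct_hd_last[OF d(1) s(2)] distinct_hd_last[OF d(2) s(3)] by auto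
  then have "length ys = 1" "length zs = 1" by (metis length_Cons list.size(3) One_nat_def)+
  then have "length xs = 2" using s(1) by simp
  then show False using assms by simp
qed



definition reach :: "'a set set \<Rightarrow> 'a set \<Rightarrow> 'a \<Rightarrow> 'a \<Rightarrow> bool" where
  "reach F A x y \<longleftrightarrow> (\<exists>p. walk F p \<and> set p \<subseteq> A \<and> hd p = x \<and> last p = y)"

lemma reachI: "walk F p \<Longrightarrow> set p \<subseteq> A \<Longrightarrow> hd p = x \<Longrightarrow> last p = y \<Longrightarrow> reach F A x y"
  unfolding reach_def by blast

lemma reach_refl: "x \<in> A \<Longrightarrow> reach F A x x"
  unfolding reach_def by (intro exI[of _ "[x]"]) (simp add: walk_iff)

lemma reach_edge: "{x, y} \<in> F \<Longrightarrow> x \<in> A \<Longrightarrow> y \<in> A \<Longrightarrow> reach F A x y"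
  unfolding reach_def by (intro exI[of _ "[x, y]"]) (simp add: walk_iff)

lemma reach_sym: "reach F A x y \<Longrightarrow> reach F A y x"
  unfolding reach_def
proof (elim exE conjE)
  fix p assume p: "walk F p" "set p \<subseteq> A" "hd p = x" "last p = y"
  then have "p \<noteq> []" by (simp add: walk_iff)
  then show "\<exists>p. walk F p \<and> set p \<subseteq> A \<and> hd p = y \<and> last p = x"
    using p by (intro exI[of _ "rev p"]) (simp add: walk_iff hd_rev last_rev)
qed

lemma reach_trans: "reach F A x y \<Longrightarrow> reach F A y z \<Longrightarrow> reach F A x z"
  unfolding reach_def
proof (elim exE conjE)
  fix p q assume p: "walk F p" "set p \<subseteq> A" "hd p = x" "last p = y"
    and q: "walk F q" "set q \<subseteq> A" "hd q = y" "last q = z"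
  have ne: "p \<noteq> []" "q \<noteq> []" using p q by (auto simp: walk_iff)
  have w: "walk F (p @ tl q)" using p q ne by (simp add: walk_iff pe_glue)
  have s: "set (p @ tl q) \<subseteq> A" using p(2) q(2) ne by (cases q) auto
  have h: "hd (p @ tl q) = x" using ne p by simp
  have l: "last (p @ tl q) = z"
  proof (cases "tl q = []")
    case True
    then have "q = [y]" using ne q(3) by (cases q) auto
    then show ?thesis using True p q by simp
  next
    case False
    then show ?thesis using q(4) ne by (cases q) auto
  qed
  show "\<exists>p. walk F p \<and> set p \<subseteq> A \<and> hd p = x \<and> last p = z"
    using w s h l by blast
qed

lemma reach_mono: "reach F A x y \<Longrightarrow> F \<subseteq> G \<Longrightarrow> A \<subseteq> B \<Longrightarrow> reach G B x y"
  unfolding reach_def using walk_mono by blast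

lemma reach_in: "reach F A x y \<Longrightarrow> x \<in> A \<and> y \<in> A"
  unfolding reach_def by (auto simp: walk_iff)

lemma reach_path: "reach F A x y \<Longrightarrow> \<exists>q. path F q \<and> set q \<subseteq> A \<and> hd q = x \<and> last q = y"
  unfolding reach_def using walk_to_path by (metis order_trans)

lemma path_reach: "path F q \<Longrightarrow> set q \<subseteq> A \<Longrightarrow> reach F A (hd q) (last q)"
  unfolding reach_def path_def by blast

lemma reach_prefix:
  assumes "walk F p" "set p \<subseteq> A" "z \<in> set p"
  shows "reach F A (hd p) z"
proof -
  obtain r s where rs: "p = r @ z # s" using assms(3) by (meson split_list)
  show ?thesis
  proof (cases "r = []")
    case True
    then show ?thesis using rs assms reach_refl by auto
  next
    case False
    have "path_edges (r @ [z]) \<subseteq> path_edges p" using rs False by (auto simp: pe_append)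
    then have "walk F (r @ [z])" using assms(1) by (auto simp: walk_iff)
    moreover have "set (r @ [z]) \<subseteq> A" using assms(2) rs by auto
    ultimately show ?thesis unfolding reach_def using rs False by (intro exI[of _ "r @ [z]"]) auto
  qed
qed

lemma connected_iff: "connected_on A F \<longleftrightarrow> (\<forall>u\<in>A. \<forall>v\<in>A. reach F A u v)"
  by (simp add: connected_on_def reach_def)

lemma class_reach:
  assumes "reach F A x y"
  shows "reach (induced_edges F {v. reach F A x v}) {v. reach F A x v} x y"
proof -
  obtain p where p: "walk F p" "set p \<subseteq> A" "hd p = x" "last p = y" using assms unfolding reach_def by blast
  have s: "set p \<subseteq> {v. reach F A x v}"
  proof
    fix z assume "z \<in> set p"
    then have "reach F A (hd p) z" using reach_prefix[OF p(1,2)] by blast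
    then show "z \<in> {v. reach F A x v}" using p(3) by simp
  qed
  have "path_edges p \<subseteq> induced_edges F {v. reach F A x v}"
  proof
    fix f assume f: "f \<in> path_edges p"
    then have "f \<in> F" using p(1) by (auto simp: walk_iff)
    moreover have "f \<subseteq> {v. reach F A x v}" using pe_subset[OF f] s by (rule order_trans)
    ultimately show "f \<in> induced_edges F {v. reach F A x v}" by (simp add: induced_edges_def)
  qed
  then have w: "walk (induced_edges F {v. reach F A x v}) p" using p(1) by (simp add: walk_iff)
  show ?thesis by (rule reachI[OF w s p(3,4)])
qed

lemma class_conn: "connected_on {v. reach F A x v} (induced_edges F {v. reach F A x v})"
  unfolding connected_iff
proof (intro ballI)
  fix u v assume u: "u \<in> {v. reach F A x v}" and v: "v \<in> {v. reach F A x v}"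
  have 1: "reach (induced_edges F {v. reach F A x v}) {v. reach F A x v} x u"
    using class_reach[of F A x u] u by simp
  have 2: "reach (induced_edges F {v. reach F A x v}) {v. reach F A x v} x v"
    using class_reach[of F A x v] v by simp
  show "reach (induced_edges F {v. reach F A x v}) {v. reach F A x v} u v"
    by (rule reach_trans[OF reach_sym[OF 1] 2])
qed

lemma conn_mono: "connected_on A F \<Longrightarrow> F \<subseteq> G \<Longrightarrow> connected_on A G"
  unfolding connected_iff by (meson reach_mono order_refl)

lemma acyc_mono: "acyclic_edges G \<Longrightarrow> F \<subseteq> G \<Longrightarrow> acyclic_edges F"
  unfolding acyclic_edges_def by (meson cycle_mono)

lemma induced_mono: "F \<subseteq> G \<Longrightarrow> induced_edges F S \<subseteq> induced_edges G S"
  by (auto simp: induced_edges_def)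

lemma split_tree:
  assumes conn: "connected_on V T" and acyc: "acyclic_edges T"
    and g: "{u, w} \<in> T" "u \<noteq> w" "u \<in> V" "w \<in> V"
  shows "{v. reach (T - {{u,w}}) V u v} \<union> {v. reach (T - {{u,w}}) V w v} = V"
    "{v. reach (T - {{u,w}}) V u v} \<inter> {v. reach (T - {{u,w}}) V w v} = {}"
    "u \<in> {v. reach (T - {{u,w}}) V u v}" "w \<in> {v. reach (T - {{u,w}}) V w v}"
proof -
  let ?T = "T - {{u,w}}"
  show "u \<in> {v. reach ?T V u v}" "w \<in> {v. reach ?T V w v}" using reach_refl[OF g(3)] reach_refl[OF g(4)] by auto
  have nr: "\<not> reach ?T V u w"
  proof
    assume "reach ?T V u w"
    from reach_path[OF this] obtain r where r: "path ?T r" "hd r = u" "last r = w" by blast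
    have rne: "r \<noteq> []" using r(1) path_nonempty by blast
    then obtain a r' where ar: "r = a # r'" by (cases r) auto
    have r'ne: "r' \<noteq> []" using ar r g(2) by auto
    then obtain b r'' where br: "r' = b # r''" by (cases r') auto
    show False
    proof (cases "r'' = []")
      case True
      then have "path_edges r = {{u, w}}" using ar br r by simp
      then show False using r(1) by (simp add: path_def walk_iff)
    next
      case False
      have "path T r" using r(1) path_mono by blast
      moreover have "3 \<le> length r" using ar br False by (cases r'') auto
      ultimately show False using no_cycle[OF acyc] r g(1) by blast
    qed
  qed
  show "{v. reach ?T V u v} \<inter> {v. reach ?T V w v} = {}"
  proof (rule ccontr)
    assume "{v. reach ?T V u v} \<inter> {v. reach ?T V w v} \<noteq> {}"
    then obtain z where "reach ?T V u z" "reach ?T V w z" by blast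
    then have "reach ?T V u w" by (meson reach_sym reach_trans)
    then show False using nr by blast
  qed
  show "{v. reach ?T V u v} \<union> {v. reach ?T V w v} = V"
  proof
    show "{v. reach ?T V u v} \<union> {v. reach ?T V w v} \<subseteq> V" using reach_in by fast
  next
    show "V \<subseteq> {v. reach ?T V u v} \<union> {v. reach ?T V w v}"
    proof
      fix v assume v: "v \<in> V"
      have "reach T V w v" using conn v g(4) unfolding connected_iff by blast
      from reach_path[OF this] obtain r where r: "path T r" "set r \<subseteq> V" "hd r = w" "last r = v" by blast
      have rne: "r \<noteq> []" using r(1) path_nonempty by blast
      show "v \<in> {v. reach ?T V u v} \<union> {v. reach ?T V w v}"
      proof (cases "{u, w} \<in> path_edges r")
        case False
        then have "walk ?T r" using r(1) by (auto simp: path_def walk_iff)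
        then have "reach ?T V w v" by (rule reachI[OF _ r(2) r(3) r(4)])
        then show ?thesis by blast
      next
        case True
        obtain r' where r': "r = w # r'" using rne r(3) by (cases r) auto
        have r'ne: "r' \<noteq> []" using True r' by auto
        have wn: "w \<notin> set r'" using r(1) r' by (simp add: path_def)
        have "{u, w} \<notin> path_edges r'" using wn pe_subset by blast
        then have "{u, w} = {w, hd r'}" using True r' r'ne by (simp add: pe_Cons)
        then have hu: "hd r' = u" using g(2) by (auto simp: doubleton_eq_iff)
        have "path_edges r' \<subseteq> T" using r(1) r' r'ne by (auto simp: path_def walk_iff pe_Cons)
        then have "walk ?T r'" using \<open>{u, w} \<notin> path_edges r'\<close> r'ne by (auto simp: walk_iff)
        moreover have "set r' \<subseteq> V" "last r' = v" using r r' r'ne by auto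
        ultimately have "reach ?T V u v" using reachI[of ?T r' V u v] hu by simp
        then show ?thesis by blast
      qed
    qed
  qed
qed



lemma edge_form:
  assumes "graph V E" "f \<in> E"
  obtains x y where "f = {x, y}" "x \<noteq> y" "x \<in> V" "y \<in> V"
proof -
  have "card f = 2" "f \<subseteq> V" using assms by (auto simp: graph_def)
  then obtain x y where "f = {x, y}" "x \<noteq> y" by (auto simp: card_2_iff)
  then show ?thesis using that \<open>f \<subseteq> V\<close> by blast
qed

lemma fwd_finish:
  assumes "S1 \<union> S2 = V" "S1 \<inter> S2 = {}" "(t1 \<in> S1 \<and> t2 \<in> S2) \<or> (t1 \<in> S2 \<and> t2 \<in> S1)"
    "connected_on S1 (induced_edges T' S1)" "connected_on S2 (induced_edges T' S2)"
    "T' \<subseteq> E" "induced_edges E S1 \<subseteq> T" "induced_edges E S2 \<subseteq> T" "acyclic_edges T"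
  shows "\<exists>S1 S2. S1 \<union> S2 = V \<and> S1 \<inter> S2 = {} \<and>
            ((t1 \<in> S1 \<and> t2 \<in> S2) \<or> (t1 \<in> S2 \<and> t2 \<in> S1)) \<and>
            connected_on S1 (induced_edges E S1) \<and> connected_on S2 (induced_edges E S2) \<and>
            acyclic_edges (induced_edges E S1) \<and> acyclic_edges (induced_edges E S2)"
proof -
  have "connected_on S1 (induced_edges E S1)" using conn_mono[OF assms(4) induced_mono[OF assms(6)]] .
  moreover have "connected_on S2 (induced_edges E S2)" using conn_mono[OF assms(5) induced_mono[OF assms(6)]] .
  moreover have "acyclic_edges (induced_edges E S1)" using acyc_mono[OF assms(9) assms(7)] .
  moreover have "acyclic_edges (induced_edges E S2)" using acyc_mono[OF assms(9) assms(8)] .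
  ultimately show ?thesis using assms(1-3) by blast
qed

lemma induced_in_tree:
  assumes "graph V E" "acyclic_edges T" "T \<subseteq> E" "\<forall>f \<in> E - T. e \<in> fundamental_cycle T f"
    "connected_on S (induced_edges (T - {e}) S)" "\<not> e \<subseteq> S"
  shows "induced_edges E S \<subseteq> T"
proof
  fix f assume f: "f \<in> induced_edges E S"
  show "f \<in> T"
  proof (rule ccontr)
    assume fT: "f \<notin> T"
    have fE: "f \<in> E" "f \<subseteq> S" using f by (auto simp: induced_edges_def)
    obtain x y where xy: "f = {x, y}" "x \<noteq> y" using edge_form[OF assms(1) fE(1)] by metis
    have "x \<in> S" "y \<in> S" using fE xy by auto
    then have "reach (induced_edges (T - {e}) S) S x y" using assms(5) unfolding connected_iff by blast
    from reach_path[OF this] obtain q where q: "path (induced_edges (T - {e}) S) q" "hd q = x" "last q = y"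
      by blast
    have sub: "induced_edges (T - {e}) S \<subseteq> T - {e}" by (auto simp: induced_edges_def)
    have "path T q" using path_mono[OF q(1)] sub by blast
    then have fc: "fundamental_cycle T f = insert f (path_edges q)"
      using fc_eq[OF assms(2)] q xy by simp
    have "e \<in> fundamental_cycle T f" using assms(4) fE fT by blast
    moreover have "e \<noteq> f" using assms(6) fE by blast
    ultimately have "e \<in> path_edges q" using fc by simp
    moreover have "path_edges q \<subseteq> T - {e}" using q(1) sub by (auto simp: path_def walk_iff)
    ultimately show False by blast
  qed
qed

lemma E_sub:
  assumes "graph V E" "acyclic_edges T" "connected_on V T" "\<forall>f \<in> E - T. e \<in> fundamental_cycle T f"
    "e \<notin> T"
  shows "E \<subseteq> insert e T"
proof
  fix f assume fE: "f \<in> E"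
  show "f \<in> insert e T"
  proof (rule ccontr)
    assume "f \<notin> insert e T"
    then have fT: "f \<notin> T" "f \<noteq> e" by auto
    obtain x y where xy: "f = {x, y}" "x \<noteq> y" "x \<in> V" "y \<in> V" using edge_form[OF assms(1) fE] by metis
    have "reach T V x y" using assms(3) xy unfolding connected_iff by blast
    from reach_path[OF this] obtain q where q: "path T q" "hd q = x" "last q = y" by blast
    then have fc: "fundamental_cycle T f = insert f (path_edges q)"
      using fc_eq[OF assms(2)] q xy by simp
    have "e \<in> fundamental_cycle T f" using assms(4) fE fT by blast
    then have "e \<in> path_edges q" using fc fT by simp
    moreover have "path_edges q \<subseteq> T" using q(1) by (auto simp: path_def walk_iff)
    ultimately show False using assms(5) by blast
  qed
qed



lemma forward:
  assumes G: "graph V E" and e: "{t1, t2} \<in> E" and B: "fundamental_rooted_basis V E {t1, t2} T"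
  shows "\<exists>S1 S2. S1 \<union> S2 = V \<and> S1 \<inter> S2 = {} \<and>
            ((t1 \<in> S1 \<and> t2 \<in> S2) \<or> (t1 \<in> S2 \<and> t2 \<in> S1)) \<and>
            connected_on S1 (induced_edges E S1) \<and> connected_on S2 (induced_edges E S2) \<and>
            acyclic_edges (induced_edges E S1) \<and> acyclic_edges (induced_edges E S2)"
proof -
  have TE: "T \<subseteq> E" and conn: "connected_on V T" and acyc: "acyclic_edges T"
    and H: "\<forall>f \<in> E - T. {t1, t2} \<in> fundamental_cycle T f"
    using B by (auto simp: fundamental_rooted_basis_def spanning_tree_def)
  have c2: "card {t1, t2} = 2" and tV: "{t1, t2} \<subseteq> V" using G e by (auto simp: graph_def)
  have neq: "t1 \<noteq> t2"
  proof
    assume "t1 = t2" then show False using c2 by simp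
  qed
  have t1V: "t1 \<in> V" and t2V: "t2 \<in> V" using tV by auto
  show ?thesis
  proof (cases "{t1, t2} \<in> T")
    case True
    define T' where "T' = T - {{t1, t2}}"
    define S1 where "S1 = {v. reach T' V t1 v}"
    define S2 where "S2 = {v. reach T' V t2 v}"
    note st = split_tree[OF conn acyc True neq t1V t2V, folded T'_def, folded S1_def S2_def]
    have c1: "connected_on S1 (induced_edges T' S1)" unfolding S1_def by (rule class_conn)
    have c2: "connected_on S2 (induced_edges T' S2)" unfolding S2_def by (rule class_conn)
    have n1: "\<not> {t1, t2} \<subseteq> S1" using st(2,4) by blast
    have n2: "\<not> {t1, t2} \<subseteq> S2" using st(2,3) by blast
    have i1: "induced_edges E S1 \<subseteq> T" using induced_in_tree[OF G acyc TE H _ n1] c1 T'_def by simp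
    have i2: "induced_edges E S2 \<subseteq> T" using induced_in_tree[OF G acyc TE H _ n2] c2 T'_def by simp
    have "T' \<subseteq> E" using TE T'_def by blast
    then show ?thesis using fwd_finish[OF st(1,2) _ c1 c2 _ i1 i2 acyc] st(3,4) by blast
  next
    case False
    have Es: "E \<subseteq> insert {t1, t2} T" using E_sub[OF G acyc conn H False] .
    have "reach T V t1 t2" using conn t1V t2V unfolding connected_iff by blast
    from reach_path[OF this] obtain p where p: "path T p" "set p \<subseteq> V" "hd p = t1" "last p = t2" by blast
    have pne: "p \<noteq> []" using path_nonempty[OF p(1)] .
    then obtain p' where pp: "p = t1 # p'" using p(3) by (cases p) auto
    have p'ne: "p' \<noteq> []" using pp p(4) neq by auto
    define x where "x = hd p'"
    have peq: "path_edges p = insert {t1, x} (path_edges p')" using pp p'ne x_def by (simp add: pe_Cons)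
    have gT: "{t1, x} \<in> T" using p(1) peq by (auto simp: path_def walk_iff)
    have xV: "x \<in> V" using p(2) pp p'ne x_def by auto
    have tx: "t1 \<noteq> x" using p(1) pp p'ne x_def by (auto simp: path_def)
    define T' where "T' = T - {{t1, x}}"
    define S1 where "S1 = {v. reach T' V t1 v}"
    define S2 where "S2 = {v. reach T' V x v}"
    note st = split_tree[OF conn acyc gT tx t1V xV, folded T'_def, folded S1_def S2_def]
    have c1: "connected_on S1 (induced_edges T' S1)" unfolding S1_def by (rule class_conn)
    have c2: "connected_on S2 (induced_edges T' S2)" unfolding S2_def by (rule class_conn)
    have t2S1: "t2 \<notin> S1"
    proof
      assume "t2 \<in> S1"
      then have "reach T' V t1 t2" by (simp add: S1_def)
      from reach_path[OF this] obtain q where q: "path T' q" "hd q = t1" "last q = t2" by blast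
      have "path T q" using path_mono[OF q(1)] T'_def by blast
      then have "q = p" using path_unique[OF acyc _ p(1)] q p by simp
      then have "{t1, x} \<in> path_edges q" using peq by simp
      moreover have "path_edges q \<subseteq> T'" using q(1) by (simp add: path_def walk_iff)
      ultimately show False using T'_def by blast
    qed
    then have t2S2: "t2 \<in> S2" using st(1) t2V by blast
    have i1: "induced_edges E S1 \<subseteq> T"
    proof
      fix f assume f: "f \<in> induced_edges E S1"
      then have "f \<in> insert {t1, t2} T" "f \<subseteq> S1" using Es by (auto simp: induced_edges_def)
      then show "f \<in> T" using t2S1 by blast
    qed
    have i2: "induced_edges E S2 \<subseteq> T"
    proof
      fix f assume f: "f \<in> induced_edges E S2"
      then have "f \<in> insert {t1, t2} T" "f \<subseteq> S2" using Es by (auto simp: induced_edges_def)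
      then show "f \<in> T" using st(2,3) by blast
    qed
    have "T' \<subseteq> E" using TE T'_def by blast
    then show ?thesis using fwd_finish[OF st(1,2) _ c1 c2 _ i1 i2 acyc] st(3) t2S2 by blast
  qed
qed



lemma walk_closed:
  assumes "walk F p" "\<forall>f\<in>F. \<forall>x y. f = {x, y} \<longrightarrow> x \<in> S \<longrightarrow> y \<in> S" "hd p \<in> S"
  shows "set p \<subseteq> S"
  using assms
proof (induction p)
  case Nil then show ?case by simp
next
  case (Cons x p)
  show ?case
  proof (cases "p = []")
    case True then show ?thesis using Cons.prems by simp
  next
    case False
    have e: "{x, hd p} \<in> F" and w: "walk F p" using Cons.prems(1) False by (auto simp: walk_iff pe_Cons)
    have "hd p \<in> S" using Cons.prems(2) e Cons.prems(3) by auto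
    then have "set p \<subseteq> S" using Cons.IH[OF w Cons.prems(2)] by blast
    then show ?thesis using Cons.prems(3) by simp
  qed
qed

lemma backward:
  assumes G: "graph V E" and e: "{a, b} \<in> E"
    and P: "S1 \<union> S2 = V" "S1 \<inter> S2 = {}" "a \<in> S1" "b \<in> S2"
    and C: "connected_on S1 (induced_edges E S1)" "connected_on S2 (induced_edges E S2)"
    and A: "acyclic_edges (induced_edges E S1)" "acyclic_edges (induced_edges E S2)"
  shows "fundamental_rooted_basis V E {a, b} (insert {a, b} (induced_edges E S1 \<union> induced_edges E S2))"
proof -
  define E12 where "E12 = induced_edges E S1 \<union> induced_edges E S2"
  define T where "T = insert {a, b} E12"
  have cl1: "\<forall>f\<in>E12. \<forall>x y. f = {x, y} \<longrightarrow> x \<in> S1 \<longrightarrow> y \<in> S1"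
    using P(2) by (auto simp: E12_def induced_edges_def)
  have cl2: "\<forall>f\<in>E12. \<forall>x y. f = {x, y} \<longrightarrow> x \<in> S2 \<longrightarrow> y \<in> S2"
    using P(2) by (auto simp: E12_def induced_edges_def)
  have cross: False if w: "walk E12 w" "{hd w, last w} = {a, b}" for w
  proof -
    have wne: "w \<noteq> []" using w(1) by (simp add: walk_iff)
    have lw: "last w \<in> set w" using wne by simp
    from w(2) have "(hd w = a \<and> last w = b) \<or> (hd w = b \<and> last w = a)" by (auto simp: doubleton_eq_iff)
    then show False
    proof
      assume h: "hd w = a \<and> last w = b"
      then have "set w \<subseteq> S1" using walk_closed[OF w(1) cl1] P(3) by simp
      then show False using lw h P(2,4) by blast
    next
      assume h: "hd w = b \<and> last w = a"
      then have "set w \<subseteq> S2" using walk_closed[OF w(1) cl2] P(4) by simp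
      then show False using lw h P(2,3) by blast
    qed
  qed
  have TmE: "T - {{a, b}} \<subseteq> E12" by (auto simp: T_def)
  have TE: "T \<subseteq> E" using e by (auto simp: T_def E12_def induced_edges_def)
  have TV: "\<forall>f\<in>T. f \<subseteq> V" using P(1,3,4) by (auto simp: T_def E12_def induced_edges_def)
  have acyc: "acyclic_edges T"
    unfolding acyclic_edges_def
  proof
    assume "\<exists>xs. is_cycle T xs"
    then obtain xs where xs: "3 \<le> length xs" "path T xs" "{last xs, hd xs} \<in> T"
      by (auto simp: is_cycle_def)
    have xne: "xs \<noteq> []" using xs(1) by auto
    have dx: "distinct xs" and pex: "path_edges xs \<subseteq> T" using xs(2) by (auto simp: path_def walk_iff)
    define c where "c = {last xs, hd xs}"
    have cT: "c \<in> T" using xs(3) c_def by simp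
    show False
    proof (cases "c = {a, b}")
      case True
      have "{hd xs, last xs} \<notin> path_edges xs" using ends_not_edge[OF dx xs(1)] .
      then have "{a, b} \<notin> path_edges xs" using True c_def by (simp add: insert_commute)
      then have "walk E12 xs" using pex TmE xne by (auto simp: walk_iff)
      moreover have "{hd xs, last xs} = {a, b}" using True c_def by (simp add: insert_commute)
      ultimately show False using cross by blast
    next
      case cne: False
      show False
      proof (cases "{a, b} \<in> path_edges xs")
        case False
        then have pe12: "path_edges xs \<subseteq> E12" using pex TmE by blast
        have c12: "c \<in> E12" using cT cne TmE by blast
        have hV: "hd xs \<in> V" using TV cT c_def by auto
        have cyc_in: False if S: "S = S1 \<or> S = S2" "hd xs \<in> S" for S
        proof -
          have clS: "\<forall>f\<in>E12. \<forall>x y. f = {x, y} \<longrightarrow> x \<in> S \<longrightarrow> y \<in> S" using S(1) cl1 cl2 by blast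
          have "walk E12 xs" using pe12 xne by (simp add: walk_iff)
          then have sS: "set xs \<subseteq> S" using walk_closed[OF _ clS S(2)] by blast
          have sub: "path_edges xs \<subseteq> induced_edges E S"
          proof
            fix f assume f: "f \<in> path_edges xs"
            then have "f \<in> E" using pex TE by blast
            moreover have "f \<subseteq> S" using pe_subset[OF f] sS by blast
            ultimately show "f \<in> induced_edges E S" by (simp add: induced_edges_def)
          qed
          have "c \<subseteq> S" using sS xne c_def by auto
          then have "c \<in> induced_edges E S" using cT TE by (simp add: induced_edges_def subset_eq)
          then have "is_cycle (induced_edges E S) xs"
            using sub dx xs(1) xne c_def by (simp add: is_cycle_def path_def walk_iff)
          moreover have "acyclic_edges (induced_edges E S)" using S(1) A by blast
          ultimately show False by (simp add: acyclic_edges_def)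
        qed
        show False using hV P(1) cyc_in by blast
      next
        case True
        from True[unfolded pe_split] obtain ys zs where s: "xs = ys @ zs" "ys \<noteq> []" "zs \<noteq> []"
          "{a, b} = {last ys, hd zs}" by blast
        have disj: "set ys \<inter> set zs = {}" using dx s(1) by simp
        have ly: "last ys \<in> set ys" and hz: "hd zs \<in> set zs" using s by auto
        have pexy: "path_edges xs = path_edges ys \<union> path_edges zs \<union> {{last ys, hd zs}}"
          using pe_append[OF s(2,3)] s(1) by simp
        define w where "w = zs @ ys"
        have pew: "path_edges w = path_edges zs \<union> path_edges ys \<union> {{last zs, hd ys}}"
          using pe_append[OF s(3,2)] w_def by simp
        have lz: "last zs = last xs" and hy: "hd ys = hd xs" using s by auto
        have n1: "{a, b} \<notin> path_edges ys"
        proof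
          assume "{a, b} \<in> path_edges ys"
          then have "hd zs \<in> set ys" using pe_subset s(4) by blast
          then show False using hz disj by blast
        qed
        have n2: "{a, b} \<notin> path_edges zs"
        proof
          assume "{a, b} \<in> path_edges zs"
          then have "last ys \<in> set zs" using pe_subset s(4) by blast
          then show False using ly disj by blast
        qed
        have "{last zs, hd ys} = c" using lz hy c_def by simp
        then have "path_edges w \<subseteq> T - {{a, b}}" using pew pexy pex cT cne n1 n2 by blast
        then have "walk E12 w" using TmE s(2) w_def by (auto simp: walk_iff)
        moreover have "{hd w, last w} = {a, b}" using s w_def by (simp add: insert_commute)
        ultimately show False using cross by blast
      qed
    qed
  qed
  have reachA: "reach T V a u" if u: "u \<in> V" for u
  proof -
    have abV: "a \<in> V" "b \<in> V" using P by auto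
    have rab: "reach T V a b" using reach_edge[of a b T V] abV by (simp add: T_def)
    have s1: "induced_edges E S1 \<subseteq> T" "induced_edges E S2 \<subseteq> T" by (auto simp: T_def E12_def)
    have sv: "S1 \<subseteq> V" "S2 \<subseteq> V" using P(1) by auto
    show ?thesis
    proof (cases "u \<in> S1")
      case True
      then have "reach (induced_edges E S1) S1 a u" using C(1) P(3) unfolding connected_iff by blast
      then show ?thesis using reach_mono[OF _ s1(1) sv(1)] by blast
    next
      case False
      then have "u \<in> S2" using u P(1) by blast
      then have "reach (induced_edges E S2) S2 b u" using C(2) P(4) unfolding connected_iff by blast
      then have "reach T V b u" using reach_mono[OF _ s1(2) sv(2)] by blast
      then show ?thesis using reach_trans[OF rab] by blast
    qed
  qed
  have conn: "connected_on V T"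
    unfolding connected_iff
  proof (intro ballI)
    fix u v assume "u \<in> V" "v \<in> V"
    then show "reach T V u v" using reach_trans[OF reach_sym[OF reachA] reachA] by blast
  qed
  have fund: "\<forall>f \<in> E - T. {a, b} \<in> fundamental_cycle T f"
  proof
    fix f assume f: "f \<in> E - T"
    obtain x y where xy: "f = {x, y}" "x \<noteq> y" "x \<in> V" "y \<in> V" using edge_form[OF G] f by blast
    have no1: "\<not> f \<subseteq> S1" using f by (auto simp: T_def E12_def induced_edges_def)
    have no2: "\<not> f \<subseteq> S2" using f by (auto simp: T_def E12_def induced_edges_def)
    have sides: "(x \<in> S1 \<and> y \<in> S2) \<or> (x \<in> S2 \<and> y \<in> S1)" using xy no1 no2 P(1) by blast
    have "reach T V x y" using conn xy unfolding connected_iff by blast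
    from reach_path[OF this] obtain q where q: "path T q" "hd q = x" "last q = y" by blast
    have fc: "fundamental_cycle T f = insert f (path_edges q)" using fc_eq[OF acyc q(1)] q xy by simp
    have "{a, b} \<in> path_edges q"
    proof (rule ccontr)
      assume nab: "{a, b} \<notin> path_edges q"
      have qne: "q \<noteq> []" using path_nonempty[OF q(1)] .
      have "path_edges q \<subseteq> T" using q(1) by (simp add: path_def walk_iff)
      then have wq: "walk E12 q" using nab TmE qne by (auto simp: walk_iff)
      have lq: "last q \<in> set q" using qne by simp
      from sides show False
      proof
        assume s: "x \<in> S1 \<and> y \<in> S2"
        then have "set q \<subseteq> S1" using walk_closed[OF wq cl1] q(2) by simp
        then show False using lq q(3) s P(2) by blast
      next
        assume s: "x \<in> S2 \<and> y \<in> S1"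
        then have "set q \<subseteq> S2" using walk_closed[OF wq cl2] q(2) by simp
        then show False using lq q(3) s P(2) by blast
      qed
    qed
    then show "{a, b} \<in> fundamental_cycle T f" using fc by simp
  qed
  show ?thesis
    unfolding fundamental_rooted_basis_def spanning_tree_def
    using TE conn acyc fund by (simp add: T_def E12_def)
qed


theorem mainTheorem15:
  fixes V :: "'a set" and E :: "'a set set" and t1 t2 :: 'a
  assumes "graph V E"
    and "{t1, t2} \<in> E"
  shows "(\<exists>T. fundamental_rooted_basis V E {t1, t2} T) \<longleftrightarrow>
         (\<exists>S1 S2. S1 \<union> S2 = V \<and> S1 \<inter> S2 = {} \<and>
            ((t1 \<in> S1 \<and> t2 \<in> S2) \<or> (t1 \<in> S2 \<and> t2 \<in> S1)) \<and>
            connected_on S1 (induced_edges E S1) \<and> connected_on S2 (induced_edges E S2) \<and>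
            acyclic_edges (induced_edges E S1) \<and> acyclic_edges (induced_edges E S2))"
proof
  assume "\<exists>T. fundamental_rooted_basis V E {t1, t2} T"
  then obtain T where "fundamental_rooted_basis V E {t1, t2} T" by blast
  then show "\<exists>S1 S2. S1 \<union> S2 = V \<and> S1 \<inter> S2 = {} \<and>
            ((t1 \<in> S1 \<and> t2 \<in> S2) \<or> (t1 \<in> S2 \<and> t2 \<in> S1)) \<and>
            connected_on S1 (induced_edges E S1) \<and> connected_on S2 (induced_edges E S2) \<and>
            acyclic_edges (induced_edges E S1) \<and> acyclic_edges (induced_edges E S2)"
    using forward[OF assms] by blast
next
  assume "\<exists>S1 S2. S1 \<union> S2 = V \<and> S1 \<inter> S2 = {} \<and>
            ((t1 \<in> S1 \<and> t2 \<in> S2) \<or> (t1 \<in> S2 \<and> t2 \<in> S1)) \<and>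
            connected_on S1 (induced_edges E S1) \<and> connected_on S2 (induced_edges E S2) \<and>
            acyclic_edges (induced_edges E S1) \<and> acyclic_edges (induced_edges E S2)"
  then obtain S1 S2 where P: "S1 \<union> S2 = V" "S1 \<inter> S2 = {}"
      "(t1 \<in> S1 \<and> t2 \<in> S2) \<or> (t1 \<in> S2 \<and> t2 \<in> S1)"
      and C: "connected_on S1 (induced_edges E S1)" "connected_on S2 (induced_edges E S2)"
      and A: "acyclic_edges (induced_edges E S1)" "acyclic_edges (induced_edges E S2)" by blast
  from P(3) show "\<exists>T. fundamental_rooted_basis V E {t1, t2} T"
  proof
    assume s: "t1 \<in> S1 \<and> t2 \<in> S2"
    show ?thesis using backward[OF assms P(1,2) conjunct1[OF s] conjunct2[OF s] C A] by blast
  next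
    assume s: "t1 \<in> S2 \<and> t2 \<in> S1"
    have P': "S2 \<union> S1 = V" "S2 \<inter> S1 = {}" using P(1,2) by auto
    show ?thesis using backward[OF assms P' conjunct1[OF s] conjunct2[OF s] C(2) C(1) A(2) A(1)] by blast
  qed
qed

end
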